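(* Let $R$ be a ring (associative with identity). Then the ring $B(R)$ of all $\omega\times\omega$ row-finite and column-finite matrices over $R$ is 2-clean.
   Context: A matrix indexed by $\mathbb{N}\times\mathbb{N}$ is row-finite (resp. column-finite) if each row (resp. column) has only finitely many nonzero entries; $B(R)$ is the ring of matrices that are both, under the usual matrix operations. For a positive integer $n$, a ring $S$ is called $n$-clean if every element of $S$ can be written as $e+u_1+\cdots+u_n$ with $e=e^2\in S$ and $u_1,\dots,u_n$ units of $S$. *)

theory Defs
  imports Main
begin

text \<open>Matrices indexed by nat x nat over a ring 'a (associative, with identity;
  the classes ring + monoid_mult allow also the zero ring).\<close>

type_synonym 'a imat = "nat \<Rightarrow> nat \<Rightarrow> 'a"

definition row_finite :: "('a::zero) imat \<Rightarrow> bool" where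
  "row_finite A \<longleftrightarrow> (\<forall>i. finite {j. A i j \<noteq> 0})"

definition column_finite :: "('a::zero) imat \<Rightarrow> bool" where
  "column_finite A \<longleftrightarrow> (\<forall>j. finite {i. A i j \<noteq> 0})"

definition B_mats :: "('a::zero) imat set" where
  "B_mats = {A. row_finite A \<and> column_finite A}"

definition mat_add :: "('a::plus) imat \<Rightarrow> 'a imat \<Rightarrow> 'a imat" where
  "mat_add A B = (\<lambda>i j. A i j + B i j)"

text \<open>Usual matrix product; the sum is finite since A is row-finite.\<close>
definition mat_mul :: "('a::{ring,monoid_mult}) imat \<Rightarrow> 'a imat \<Rightarrow> 'a imat" where
  "mat_mul A B = (\<lambda>i j. \<Sum>k\<in>{k. A i k \<noteq> 0}. A i k * B k j)"

definition mat_id :: "('a::{zero,one}) imat" where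
  "mat_id = (\<lambda>i j. if i = j then 1 else 0)"

definition B_idempotent :: "('a::{ring,monoid_mult}) imat \<Rightarrow> bool" where
  "B_idempotent E \<longleftrightarrow> E \<in> B_mats \<and> mat_mul E E = E"

definition B_unit :: "('a::{ring,monoid_mult}) imat \<Rightarrow> bool" where
  "B_unit U \<longleftrightarrow> U \<in> B_mats \<and>
     (\<exists>V \<in> B_mats. mat_mul U V = mat_id \<and> mat_mul V U = mat_id)"

end

theory Submission
  imports Defs
begin

lemma corner_2clean:
  fixes p q x :: "'b::{ring,monoid_mult}"
  assumes pp: "p*p = 0" and qq: "q*q = 0" and pqp: "p*q*p = p" and qpq: "q*p*q = q"
    and one: "p*q + q*p = 1"
  shows "\<exists>E U1 U2 V1 V2. E*E = E \<and> U1*V1 = 1 \<and> V1*U1 = 1 \<and> U2*V2 = 1 \<and> V2*U2 = 1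
           \<and> x = E + U1 + U2"
proof -
  have pp': "p*(p*w) = 0" for w using pp by (metis mult.assoc mult_zero_left)
  have qq': "q*(q*w) = 0" for w using qq by (metis mult.assoc mult_zero_left)
  have pqp': "p*(q*p) = p" "p*(q*(p*w)) = p*w" for w using pqp by (simp_all add: mult.assoc[symmetric])
  have qpq': "q*(p*q) = q" "q*(p*(q*w)) = q*w" for w using qpq by (simp_all add: mult.assoc[symmetric])
  note base = pp pp' qq qq' pqp' qpq'
  define C where "C z \<longleftrightarrow> p*(q*z) = z \<and> z*(p*q) = z" for z
  have Crules: "p*(q*z) = z" "p*(q*(z*w)) = z*w" "z*(p*q) = z" "z*(p*(q*w)) = z*w"
     "p*z = 0" "p*(z*w) = 0" "z*q = 0" "z*(q*w) = 0" if "C z" for z w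
  proof -
    from that have 1: "p*(q*z) = z" and 2: "z*(p*q) = z" by (auto simp: C_def)
    show "p*(q*z) = z" "z*(p*q) = z" by fact+
    show "p*(q*(z*w)) = z*w" using 1 by (metis mult.assoc)
    show "z*(p*(q*w)) = z*w" using 2 by (metis mult.assoc)
    show pz: "p*z = 0" using 1 pp' by metis
    show "p*(z*w) = 0" by (metis pz mult.assoc mult_zero_left)
    show zq: "z*q = 0" using 2 qq by (metis mult.assoc mult_zero_right)
    show "z*(q*w) = 0" by (metis zq mult.assoc mult_zero_left)
  qed
  define u where "u = p*q"
  define a where "a = p*(q*(x*(p*q)))"
  define b where "b = p*(q*(x*q))"
  define c where "c = p*(x*(p*q))"
  define d where "d = p*(x*q)"
  have Ca: "C a" "C b" "C c" "C d" "C u"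
    unfolding C_def a_def b_def c_def d_def u_def using base by (simp_all add: mult.assoc)
  have Cclos: "C (z1*z2)" "C (z1 + z2)" "C (z1 - z2)" if "C z1" "C z2" for z1 z2
  proof -
    from that have h: "p*(q*z1) = z1" "z2*(p*q) = z2" "p*(q*z2) = z2" "z1*(p*q) = z1" by (auto simp: C_def)
    show "C (z1*z2)" unfolding C_def by (metis h mult.assoc)
    show "C (z1 + z2)" "C (z1 - z2)" unfolding C_def using h by (simp_all add: algebra_simps)
  qed
  define al where "al = a - u"
  define s where "s = b - u - u"
  define t where "t = c - u - al + al*al"
  define y where "y = d - u - u + al - t*s"
  have Cal: "C al" unfolding al_def by (intro Cclos Ca)
  have Cs: "C s" unfolding s_def by (intro Cclos Ca)
  have Ct: "C t" unfolding t_def by (intro Cclos Ca Cal)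
  have Cy: "C y" unfolding y_def by (intro Cclos Ca Cal Cs Ct)
  define E where "E = al + p + q*(al - al*al) + q*((p*q - al)*p)"
  define X where "X = p + q + q*(y*p)"
  define Xi where "Xi = - y + p + q"
  define Y where "Y = p*q + s*p + q*t + q*((p*q + t*s)*p)"
  define Yi where "Yi = p*q + s*t - s*p - q*t + q*p"
  note R = base Crules[OF Cal] Crules[OF Cs] Crules[OF Ct] Crules[OF Cy]
  have "E*E = E" unfolding E_def using R by (simp add: algebra_simps)
  moreover have "X*Xi = 1" unfolding X_def Xi_def using R one by (simp add: algebra_simps)
  moreover have "Xi*X = 1" unfolding X_def Xi_def using R one by (simp add: algebra_simps)
  moreover have "Y*Yi = 1" unfolding Y_def Yi_def using R one by (simp add: algebra_simps)
  moreover have "Yi*Y = 1" unfolding Y_def Yi_def using R one by (simp add: algebra_simps)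
  moreover have "x = E + X + Y"
  proof -
    have "x = (p*q + q*p) * x * (p*q + q*p)" using one by simp
    also have "\<dots> = a + b*p + q*c + q*(d*p)"
      unfolding a_def b_def c_def d_def by (simp add: algebra_simps)
    also have "\<dots> = E + X + Y"
      unfolding E_def X_def Y_def y_def t_def s_def al_def using R Crules[OF Ca(5)]
      by (simp add: algebra_simps u_def)
    finally show ?thesis .
  qed
  ultimately show ?thesis by blast
qed

lemma mat_mul_eq:
  fixes A :: "('a::{ring,monoid_mult}) imat"
  assumes "finite F" "{k. A i k \<noteq> 0} \<subseteq> F"
  shows "mat_mul A B i j = (\<Sum>k\<in>F. A i k * B k j)"
  unfolding mat_mul_def
  by (rule sum.mono_neutral_left) (use assms in auto)

lemma B_rowD: "A \<in> B_mats \<Longrightarrow> finite {k. A i k \<noteq> 0}"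
  by (auto simp: B_mats_def row_finite_def)
lemma B_colD: "A \<in> B_mats \<Longrightarrow> finite {i. A i k \<noteq> 0}"
  by (auto simp: B_mats_def column_finite_def)

lemma mat_mul_nz:
  fixes A :: "('a::{ring,monoid_mult}) imat"
  assumes "mat_mul A B i j \<noteq> 0"
  shows "\<exists>k. A i k \<noteq> 0 \<and> B k j \<noteq> 0"
proof (rule ccontr)
  assume "\<not> ?thesis"
  then have "mat_mul A B i j = 0" unfolding mat_mul_def by (intro sum.neutral) auto
  with assms show False by simp
qed

lemma mat_mul_closed:
  fixes A :: "('a::{ring,monoid_mult}) imat"
  assumes A: "A \<in> B_mats" and B: "B \<in> B_mats"
  shows "mat_mul A B \<in> B_mats"
proof -
  have r: "finite {j. mat_mul A B i j \<noteq> 0}" for i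
  proof (rule finite_subset)
    show "{j. mat_mul A B i j \<noteq> 0} \<subseteq> (\<Union>k\<in>{k. A i k \<noteq> 0}. {j. B k j \<noteq> 0})"
      using mat_mul_nz by fastforce
    show "finite (\<Union>k\<in>{k. A i k \<noteq> 0}. {j. B k j \<noteq> 0})"
      using B_rowD[OF A] B_rowD[OF B] by blast
  qed
  have c: "finite {i. mat_mul A B i j \<noteq> 0}" for j
  proof (rule finite_subset)
    show "{i. mat_mul A B i j \<noteq> 0} \<subseteq> (\<Union>k\<in>{k. B k j \<noteq> 0}. {i. A i k \<noteq> 0})"
      using mat_mul_nz by fastforce
    show "finite (\<Union>k\<in>{k. B k j \<noteq> 0}. {i. A i k \<noteq> 0})"
      using B_colD[OF A] B_colD[OF B] by blast
  qed
  show ?thesis using r c by (auto simp: B_mats_def row_finite_def column_finite_def)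
qed

lemma mat_add_closed:
  fixes A :: "('a::{ring,monoid_mult}) imat"
  assumes A: "A \<in> B_mats" and B: "B \<in> B_mats"
  shows "mat_add A B \<in> B_mats"
proof -
  have r: "finite {j. mat_add A B i j \<noteq> 0}" for i
    by (rule finite_subset[of _ "{j. A i j \<noteq> 0} \<union> {j. B i j \<noteq> 0}"])
       (use B_rowD[OF A] B_rowD[OF B] in \<open>auto simp: mat_add_def\<close>)
  have c: "finite {i. mat_add A B i j \<noteq> 0}" for j
    by (rule finite_subset[of _ "{i. A i j \<noteq> 0} \<union> {i. B i j \<noteq> 0}"])
       (use B_colD[OF A] B_colD[OF B] in \<open>auto simp: mat_add_def\<close>)
  show ?thesis using r c by (auto simp: B_mats_def row_finite_def column_finite_def)
qed

lemma neg_closed: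
  fixes A :: "('a::{ring,monoid_mult}) imat"
  assumes A: "A \<in> B_mats"
  shows "(\<lambda>i j. - A i j) \<in> B_mats"
  using A by (simp add: B_mats_def row_finite_def column_finite_def)

lemma zero_closed: "(\<lambda>i j. 0) \<in> B_mats"
  by (simp add: B_mats_def row_finite_def column_finite_def)

lemma id_closed: "(mat_id :: ('a::{ring,monoid_mult}) imat) \<in> B_mats"
proof -
  have "finite {j. (mat_id :: 'a imat) i j \<noteq> 0}" for i
    by (rule finite_subset[of _ "{i}"]) (auto simp: mat_id_def)
  moreover have "finite {i. (mat_id :: 'a imat) i j \<noteq> 0}" for j
    by (rule finite_subset[of _ "{j}"]) (auto simp: mat_id_def)
  ultimately show ?thesis by (auto simp: B_mats_def row_finite_def column_finite_def)
qed

lemma mat_mul_assoc: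
  fixes A :: "('a::{ring,monoid_mult}) imat"
  assumes A: "A \<in> B_mats" and B: "B \<in> B_mats"
  shows "mat_mul (mat_mul A B) C = mat_mul A (mat_mul B C)"
proof (intro ext)
  fix i l
  define F where "F = {k. A i k \<noteq> 0}"
  define G where "G = (\<Union>k\<in>F. {j. B k j \<noteq> 0})"
  have fF: "finite F" using B_rowD[OF A] by (simp add: F_def)
  have fG: "finite G" using fF B_rowD[OF B] by (simp add: G_def)
  have sG: "{j. mat_mul A B i j \<noteq> 0} \<subseteq> G" using mat_mul_nz unfolding G_def F_def by fastforce
  have "mat_mul (mat_mul A B) C i l = (\<Sum>j\<in>G. mat_mul A B i j * C j l)"
    by (rule mat_mul_eq[where A="mat_mul A B", OF fG sG])
  also have "\<dots> = (\<Sum>j\<in>G. (\<Sum>k\<in>F. A i k * B k j) * C j l)"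
    by (simp add: F_def mat_mul_def)
  also have "\<dots> = (\<Sum>j\<in>G. \<Sum>k\<in>F. A i k * (B k j * C j l))"
    by (simp add: sum_distrib_right mult.assoc)
  also have "\<dots> = (\<Sum>k\<in>F. \<Sum>j\<in>G. A i k * (B k j * C j l))"
    by (rule sum.swap)
  also have "\<dots> = (\<Sum>k\<in>F. A i k * (\<Sum>j\<in>G. B k j * C j l))"
    by (simp add: sum_distrib_left)
  also have "\<dots> = (\<Sum>k\<in>F. A i k * mat_mul B C k l)"
  proof (rule sum.cong[OF refl])
    fix k assume "k \<in> F"
    then have "{j. B k j \<noteq> 0} \<subseteq> G" by (auto simp: G_def)
    then show "A i k * (\<Sum>j\<in>G. B k j * C j l) = A i k * mat_mul B C k l"
      using mat_mul_eq[where A=B and B=C and i=k and j=l, OF fG] by simp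
  qed
  also have "\<dots> = mat_mul A (mat_mul B C) i l"
    by (rule mat_mul_eq[symmetric, OF fF]) (simp add: F_def)
  finally show "mat_mul (mat_mul A B) C i l = mat_mul A (mat_mul B C) i l" .
qed

lemma mat_mul_distrib_left:
  fixes A :: "('a::{ring,monoid_mult}) imat"
  assumes A: "A \<in> B_mats"
  shows "mat_mul A (mat_add B C) = mat_add (mat_mul A B) (mat_mul A C)"
  by (auto simp: mat_mul_def mat_add_def distrib_left sum.distrib intro!: ext)

lemma mat_mul_distrib_right:
  fixes A :: "('a::{ring,monoid_mult}) imat"
  assumes A: "A \<in> B_mats" and B: "B \<in> B_mats"
  shows "mat_mul (mat_add A B) C = mat_add (mat_mul A C) (mat_mul B C)"
proof (intro ext)
  fix i j
  define F where "F = {k. A i k \<noteq> 0} \<union> {k. B i k \<noteq> 0}"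
  have fF: "finite F" using B_rowD[OF A] B_rowD[OF B] by (simp add: F_def)
  have "mat_mul (mat_add A B) C i j = (\<Sum>k\<in>F. mat_add A B i k * C k j)"
    by (rule mat_mul_eq[OF fF]) (auto simp: F_def mat_add_def)
  also have "\<dots> = (\<Sum>k\<in>F. A i k * C k j) + (\<Sum>k\<in>F. B i k * C k j)"
    by (simp add: mat_add_def distrib_right sum.distrib)
  also have "\<dots> = mat_add (mat_mul A C) (mat_mul B C) i j"
    unfolding mat_add_def
    by (subst (1 2) mat_mul_eq[OF fF]) (auto simp: F_def)
  finally show "mat_mul (mat_add A B) C i j = mat_add (mat_mul A C) (mat_mul B C) i j" .
qed

lemma mat_mul_id_left:
  fixes A :: "('a::{ring,monoid_mult}) imat"
  shows "mat_mul mat_id A = A"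
proof (intro ext)
  fix i j
  have "mat_mul mat_id A i j = (\<Sum>k\<in>{i}. mat_id i k * A k j)"
    by (rule mat_mul_eq) (auto simp: mat_id_def)
  then show "mat_mul mat_id A i j = A i j" by (simp add: mat_id_def)
qed

lemma mat_mul_id_right:
  fixes A :: "('a::{ring,monoid_mult}) imat"
  assumes A: "A \<in> B_mats"
  shows "mat_mul A mat_id = A"
proof (intro ext)
  fix i j
  define F where "F = {k. A i k \<noteq> 0} \<union> {j}"
  have fF: "finite F" using B_rowD[OF A] by (simp add: F_def)
  have "mat_mul A mat_id i j = (\<Sum>k\<in>F. A i k * mat_id k j)"
    by (rule mat_mul_eq[OF fF]) (auto simp: F_def)
  also have "\<dots> = (\<Sum>k\<in>F. if k = j then A i j else 0)"
    by (rule sum.cong) (auto simp: mat_id_def)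
  also have "\<dots> = A i j" using fF by (simp add: F_def)
  finally show "mat_mul A mat_id i j = A i j" .
qed

typedef (overloaded) ('a::"{ring,monoid_mult}") bmat = "B_mats :: 'a imat set"
  morphisms Rep_bmat Abs_bmat
  using zero_closed by blast

instantiation bmat :: ("{ring,monoid_mult}") "{zero,one,plus,minus,uminus,times}"
begin
definition "0 = Abs_bmat (\<lambda>i j. 0)"
definition "1 = Abs_bmat mat_id"
definition "x + y = Abs_bmat (mat_add (Rep_bmat x) (Rep_bmat y))"
definition "x - y = Abs_bmat (\<lambda>i j. Rep_bmat x i j - Rep_bmat y i j)"
definition "- x = Abs_bmat (\<lambda>i j. - Rep_bmat x i j)"
definition "x * y = Abs_bmat (mat_mul (Rep_bmat x) (Rep_bmat y))"
instance ..
end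

lemma Rep_in: "Rep_bmat x \<in> B_mats" using Rep_bmat by blast

lemma Rep_zero: "Rep_bmat (0 :: 'a::{ring,monoid_mult} bmat) = (\<lambda>i j. 0)"
  by (simp add: zero_bmat_def Abs_bmat_inverse zero_closed)
lemma Rep_one: "Rep_bmat (1 :: 'a::{ring,monoid_mult} bmat) = mat_id"
  by (simp add: one_bmat_def Abs_bmat_inverse id_closed)
lemma Rep_plus: "Rep_bmat (x + y) = mat_add (Rep_bmat x) (Rep_bmat y)"
  by (simp add: plus_bmat_def Abs_bmat_inverse mat_add_closed Rep_in)
lemma Rep_uminus: "Rep_bmat (- x) = (\<lambda>i j. - Rep_bmat x i j)"
  by (simp add: uminus_bmat_def Abs_bmat_inverse neg_closed Rep_in)
lemma Rep_minus: "Rep_bmat (x - y) = (\<lambda>i j. Rep_bmat x i j - Rep_bmat y i j)"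
proof -
  have "(\<lambda>i j. Rep_bmat x i j - Rep_bmat y i j) = mat_add (Rep_bmat x) (\<lambda>i j. - Rep_bmat y i j)"
    by (simp add: mat_add_def)
  then have "(\<lambda>i j. Rep_bmat x i j - Rep_bmat y i j) \<in> B_mats"
    by (simp add: mat_add_closed neg_closed Rep_in)
  then show ?thesis by (simp add: minus_bmat_def Abs_bmat_inverse)
qed
lemma Rep_times: "Rep_bmat (x * y) = mat_mul (Rep_bmat x) (Rep_bmat y)"
  by (simp add: times_bmat_def Abs_bmat_inverse mat_mul_closed Rep_in)

lemma bmat_eqI: "Rep_bmat x = Rep_bmat y \<Longrightarrow> x = y"
  by (simp add: Rep_bmat_inject)

instance bmat :: ("{ring,monoid_mult}") ring
proof
  fix a b c :: "'a bmat"
  show "a * b * c = a * (b * c)"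
    by (rule bmat_eqI) (simp add: Rep_times mat_mul_assoc mat_mul_closed Rep_in)
  show "(a + b) * c = a * c + b * c"
    by (rule bmat_eqI) (simp add: Rep_times Rep_plus mat_mul_distrib_right Rep_in)
  show "a * (b + c) = a * b + a * c"
    by (rule bmat_eqI) (simp add: Rep_times Rep_plus mat_mul_distrib_left Rep_in)
  show "a + b + c = a + (b + c)"
    by (rule bmat_eqI) (simp add: Rep_plus mat_add_def add.assoc)
  show "a + b = b + a"
    by (rule bmat_eqI) (simp add: Rep_plus mat_add_def add.commute)
  show "0 + a = a"
    by (rule bmat_eqI) (simp add: Rep_plus Rep_zero mat_add_def)
  show "- a + a = 0"
    by (rule bmat_eqI) (simp add: Rep_plus Rep_zero Rep_uminus mat_add_def)
  show "a - b = a + - b"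
    by (rule bmat_eqI) (simp add: Rep_plus Rep_minus Rep_uminus mat_add_def)
qed

instance bmat :: ("{ring,monoid_mult}") monoid_mult
proof
  fix a :: "'a bmat"
  show "1 * a = a"
    by (rule bmat_eqI) (simp add: Rep_times Rep_one mat_mul_id_left)
  show "a * 1 = a"
    by (rule bmat_eqI) (simp add: Rep_times Rep_one mat_mul_id_right Rep_in)
qed


definition PM :: "('a::{ring,monoid_mult}) imat" where
  "PM = (\<lambda>i j. if even i \<and> j = Suc i then 1 else 0)"
definition QM :: "('a::{ring,monoid_mult}) imat" where
  "QM = (\<lambda>i j. if even j \<and> i = Suc j then 1 else 0)"
definition DE :: "('a::{ring,monoid_mult}) imat" where
  "DE = (\<lambda>i j. if even i \<and> i = j then 1 else 0)"
definition DO :: "('a::{ring,monoid_mult}) imat" where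
  "DO = (\<lambda>i j. if odd i \<and> i = j then 1 else 0)"

lemma fin_sub1: "(\<And>x. x \<in> S \<Longrightarrow> x = a) \<Longrightarrow> finite S"
  by (rule finite_subset[of _ "{a}"]) auto

lemma PM_in: "PM \<in> B_mats"
proof -
  have "finite {j. (PM::'a imat) i j \<noteq> 0}" for i
    by (rule finite_subset[of _ "{Suc i}"]) (auto simp: PM_def split: if_splits)
  moreover have "finite {i. (PM::'a imat) i j \<noteq> 0}" for j
    by (rule finite_subset[of _ "{j - 1}"]) (auto simp: PM_def split: if_splits)
  ultimately show ?thesis by (auto simp: B_mats_def row_finite_def column_finite_def)
qed

lemma QM_in: "QM \<in> B_mats"
proof -
  have "finite {j. (QM::'a imat) i j \<noteq> 0}" for i
    by (rule finite_subset[of _ "{i - 1}"]) (auto simp: QM_def split: if_splits)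
  moreover have "finite {i. (QM::'a imat) i j \<noteq> 0}" for j
    by (rule finite_subset[of _ "{Suc j}"]) (auto simp: QM_def split: if_splits)
  ultimately show ?thesis by (auto simp: B_mats_def row_finite_def column_finite_def)
qed

lemma PQ: "mat_mul PM QM = (DE :: ('a::{ring,monoid_mult}) imat)"
proof (intro ext)
  fix i j
  have "mat_mul PM QM i j = (\<Sum>k\<in>{Suc i}. (PM::'a imat) i k * QM k j)"
    by (rule mat_mul_eq) (auto simp: PM_def split: if_splits)
  then show "mat_mul PM QM i j = (DE :: 'a imat) i j" by (auto simp: PM_def QM_def DE_def)
qed

lemma QP: "mat_mul QM PM = (DO :: ('a::{ring,monoid_mult}) imat)"
proof (intro ext)
  fix i j
  have "mat_mul QM PM i j = (\<Sum>k\<in>{i - 1}. (QM::'a imat) i k * PM k j)"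
    by (rule mat_mul_eq) (auto simp: QM_def split: if_splits)
  then show "mat_mul QM PM i j = (DO :: 'a imat) i j"
    by (cases i) (auto simp: PM_def QM_def DO_def)
qed

lemma PP: "mat_mul PM PM = (\<lambda>i j. 0 :: 'a::{ring,monoid_mult})"
proof (intro ext)
  fix i j
  have "mat_mul PM PM i j = (\<Sum>k\<in>{Suc i}. (PM::'a imat) i k * PM k j)"
    by (rule mat_mul_eq) (auto simp: PM_def split: if_splits)
  then show "mat_mul PM PM i j = (0::'a)" by (simp add: PM_def)
qed

lemma QQ: "mat_mul QM QM = (\<lambda>i j. 0 :: 'a::{ring,monoid_mult})"
proof (intro ext)
  fix i j
  have "mat_mul QM QM i j = (\<Sum>k\<in>{i - 1}. (QM::'a imat) i k * QM k j)"
    by (rule mat_mul_eq) (auto simp: QM_def split: if_splits)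
  then show "mat_mul QM QM i j = (0::'a)" by (cases i) (auto simp: QM_def)
qed

lemma DEP: "mat_mul DE PM = (PM :: ('a::{ring,monoid_mult}) imat)"
proof (intro ext)
  fix i j
  have "mat_mul DE PM i j = (\<Sum>k\<in>{i}. (DE::'a imat) i k * PM k j)"
    by (rule mat_mul_eq) (auto simp: DE_def split: if_splits)
  then show "mat_mul DE PM i j = (PM :: 'a imat) i j" by (simp add: PM_def DE_def)
qed

lemma DOQ: "mat_mul DO QM = (QM :: ('a::{ring,monoid_mult}) imat)"
proof (intro ext)
  fix i j
  have "mat_mul DO QM i j = (\<Sum>k\<in>{i}. (DO::'a imat) i k * QM k j)"
    by (rule mat_mul_eq) (auto simp: DO_def split: if_splits)
  then show "mat_mul DO QM i j = (QM :: 'a imat) i j" by (auto simp: QM_def DO_def)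
qed

lemma DEDO: "mat_add DE DO = (mat_id :: ('a::{ring,monoid_mult}) imat)"
  by (auto simp: mat_add_def DE_def DO_def mat_id_def intro!: ext)

lemma units_bmat:
  "let p = Abs_bmat PM :: ('a::{ring,monoid_mult}) bmat; q = Abs_bmat QM in
   p*p = 0 \<and> q*q = 0 \<and> p*q*p = p \<and> q*p*q = q \<and> p*q + q*p = 1"
proof -
  define p where "p = (Abs_bmat PM :: 'a bmat)"
  define q where "q = (Abs_bmat QM :: 'a bmat)"
  have Rp: "Rep_bmat p = PM" unfolding p_def by (simp add: Abs_bmat_inverse PM_in)
  have Rq: "Rep_bmat q = QM" unfolding q_def by (simp add: Abs_bmat_inverse QM_in)
  have "p*p = 0" by (rule bmat_eqI) (simp add: Rep_times Rp PP Rep_zero)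
  moreover have "q*q = 0" by (rule bmat_eqI) (simp add: Rep_times Rq QQ Rep_zero)
  moreover have "p*q*p = p" by (rule bmat_eqI) (simp add: Rep_times Rp Rq PQ DEP)
  moreover have "q*p*q = q" by (rule bmat_eqI) (simp add: Rep_times Rp Rq QP DOQ)
  moreover have "p*q + q*p = 1" by (rule bmat_eqI) (simp add: Rep_times Rep_plus Rep_one Rp Rq PQ QP DEDO)
  ultimately show ?thesis by (simp add: p_def q_def Let_def)
qed


theorem theorem8:
  fixes A :: "('a::{ring,monoid_mult}) imat"
  assumes "A \<in> B_mats"
  shows "\<exists>E U1 U2. B_idempotent E \<and> B_unit U1 \<and> B_unit U2 \<and>
           A = mat_add E (mat_add U1 U2)"
proof -
  define p where "p = (Abs_bmat PM :: 'a bmat)"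
  define q where "q = (Abs_bmat QM :: 'a bmat)"
  have rel: "p*p = 0" "q*q = 0" "p*q*p = p" "q*p*q = q" "p*q + q*p = 1"
    using units_bmat[where 'a='a] unfolding p_def q_def Let_def by auto
  obtain E U1 U2 V1 V2 :: "'a bmat" where h: "E*E = E" "U1*V1 = 1" "V1*U1 = 1" "U2*V2 = 1"
    "V2*U2 = 1" "Abs_bmat A = E + U1 + U2"
    using corner_2clean[OF rel, of "Abs_bmat A"] by blast
  have unit: "B_unit (Rep_bmat U)" if "U*V = 1" "V*U = 1" for U V :: "'a bmat"
  proof -
    have "mat_mul (Rep_bmat U) (Rep_bmat V) = mat_id" "mat_mul (Rep_bmat V) (Rep_bmat U) = mat_id"
      using that by (metis Rep_times Rep_one)+
    then show ?thesis unfolding B_unit_def using Rep_in by blast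
  qed
  have "B_idempotent (Rep_bmat E)"
    unfolding B_idempotent_def using Rep_in h(1) by (metis Rep_times)
  moreover have "B_unit (Rep_bmat U1)" "B_unit (Rep_bmat U2)" using unit h by blast+
  moreover have "A = mat_add (Rep_bmat E) (mat_add (Rep_bmat U1) (Rep_bmat U2))"
  proof -
    have "A = Rep_bmat (Abs_bmat A)" using assms by (simp add: Abs_bmat_inverse)
    also have "\<dots> = Rep_bmat (E + (U1 + U2))" using h(6) by (simp add: add.assoc)
    finally show ?thesis by (simp add: Rep_plus)
  qed
  ultimately show ?thesis by blast
qed

end
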